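(* There is an absolute constant $C$ such that for every $n\ge 2$ and every family $\mathcal{F}$ of $n$ axis-parallel closed rectangles in the plane with intersection graph $G$, we have $\chi_{CF}^{cn}(G)\le C\log n$.
   Context: The intersection graph of $\mathcal{F}$ has vertex set $\mathcal{F}$, with distinct $R_1,R_2$ adjacent iff $R_1\cap R_2\neq\emptyset$. $\chi_{CF}^{cn}(G)$ is the minimum number of colors in a coloring of $V(G)$ such that for every vertex $v$, the closed neighborhood $N_G[v]=\{v\}\cup\{u:\{u,v\}\in E(G)\}$ contains a vertex whose color differs from the colors of all other vertices of $N_G[v]$. *)

theory Defs
  imports Complex_Main
begin

definition is_rectangle :: "(real \<times> real) set \<Rightarrow> bool" where
  "is_rectangle R \<longleftrightarrow> (\<exists>a b c d. a \<le> b \<and> c \<le> d \<and> R = {a..b} \<times> {c..d})"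

definition inter_adj :: "'a set \<Rightarrow> 'a set \<Rightarrow> bool" where
  "inter_adj R1 R2 \<longleftrightarrow> R1 \<noteq> R2 \<and> R1 \<inter> R2 \<noteq> {}"

definition closed_nbhd :: "'v set \<Rightarrow> ('v \<Rightarrow> 'v \<Rightarrow> bool) \<Rightarrow> 'v \<Rightarrow> 'v set" where
  "closed_nbhd V E v = {v} \<union> {u \<in> V. E u v}"

definition cf_cn_coloring :: "'v set \<Rightarrow> ('v \<Rightarrow> 'v \<Rightarrow> bool) \<Rightarrow> nat \<Rightarrow> ('v \<Rightarrow> nat) \<Rightarrow> bool" where
  "cf_cn_coloring V E k f \<longleftrightarrow> f ` V \<subseteq> {..<k} \<and>
     (\<forall>v\<in>V. \<exists>u\<in>closed_nbhd V E v. \<forall>w\<in>closed_nbhd V E v. w \<noteq> u \<longrightarrow> f w \<noteq> f u)"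

definition chi_cf_cn :: "'v set \<Rightarrow> ('v \<Rightarrow> 'v \<Rightarrow> bool) \<Rightarrow> nat" where
  "chi_cf_cn V E = (LEAST k. \<exists>f. cf_cn_coloring V E k f)"

end

theory Submission imports Defs begin

definition imeets :: "('a \<Rightarrow> real) \<Rightarrow> ('a \<Rightarrow> real) \<Rightarrow> 'a \<Rightarrow> 'a \<Rightarrow> bool" where
  "imeets lo hi u v \<longleftrightarrow> lo u \<le> hi v \<and> lo v \<le> hi u"

lemma chain:
  fixes M :: "'a set" and lo hi :: "'a \<Rightarrow> real"
  assumes fin: "finite M" and ord: "\<forall>v\<in>M. lo v \<le> hi v"
  shows "card {v\<in>M. a < lo v} = m \<Longrightarrow> c \<in> {1,2} \<Longrightarrow> \<exists>S g. S \<subseteq> M \<and> (\<forall>x\<in>S. g x \<in> {1,2::nat}) \<and>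
   (\<forall>v\<in>M. a < lo v \<longrightarrow> (\<exists>u\<in>S. imeets lo hi v u \<and> (\<forall>w\<in>S. imeets lo hi v w \<longrightarrow> w \<noteq> u \<longrightarrow> g w \<noteq> g u))) \<and>
   (S \<noteq> {} \<longrightarrow> (\<exists>f t. f \<in> S \<and> g f = c \<and> a < t \<and> lo f \<le> t \<and> t \<le> hi f \<and> (\<forall>x\<in>S-{f}. t < lo x) \<and>
      (\<forall>v\<in>M. lo v \<le> a \<longrightarrow> (\<forall>x\<in>S. imeets lo hi v x \<longrightarrow> imeets lo hi v f \<and> (x \<noteq> f \<longrightarrow> g x \<noteq> g f)))))"
proof (induction m arbitrary: a c rule: less_induct)
  case (less m)
  define P where "P = {v\<in>M. a < lo v}"
  show ?case
  proof (cases "P = {}")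
    case True
    show ?thesis
      by (rule exI[of _ "{}"], rule exI[of _ "\<lambda>_. 1"]) (use True in \<open>auto simp: P_def\<close>)
  next
    case False
    have finP: "finite P" using fin by (simp add: P_def)
    define t where "t = Min (hi ` P)"
    have tin: "t \<in> hi ` P" using finP False by (simp add: t_def)
    have tle: "\<forall>q\<in>P. t \<le> hi q" using finP by (simp add: t_def)
    obtain p where pP: "p \<in> P" and hp: "hi p = t" using tin by auto
    have pM: "p \<in> M" and ap: "a < lo p" using pP by (auto simp: P_def)
    have at: "a < t" using ap ord pM hp by force
    define C where "C = {w\<in>M. lo w \<le> t \<and> t \<le> hi w}"
    have pC: "p \<in> C" using pM hp ord by (auto simp: C_def)
    have finC: "finite C" using fin by (simp add: C_def)
    have "Max (hi ` C) \<in> hi ` C" using finC pC by (intro Max_in) auto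
    then obtain s where sC: "s \<in> C" and smax0: "hi s = Max (hi ` C)" by auto
    have smax: "\<forall>w\<in>C. hi w \<le> hi s" using finC smax0 by simp
    have sM: "s \<in> M" and ls: "lo s \<le> t" and ts: "t \<le> hi s" using sC by (auto simp: C_def)
    define a' where "a' = hi s"
    define P' where "P' = {v\<in>M. a' < lo v}"
    have "P' \<subseteq> P" using at ts by (auto simp: P'_def P_def a'_def)
    moreover have "p \<notin> P'" using ts hp ord pM by (auto simp: P'_def a'_def)
    ultimately have "P' \<subset> P" using pP by blast
    hence "card P' < card P" by (rule psubset_card_mono[OF finP])
    hence "card P' < m" using less.prems(1) by (simp add: P_def)
    moreover have "3 - c \<in> {1,2::nat}" using less.prems(2) by auto
    ultimately obtain S' g' where S'M: "S' \<subseteq> M" and g'c: "\<forall>x\<in>S'. g' x \<in> {1,2::nat}"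
      and I3: "\<forall>v\<in>M. a' < lo v \<longrightarrow> (\<exists>u\<in>S'. imeets lo hi v u \<and> (\<forall>w\<in>S'. imeets lo hi v w \<longrightarrow> w \<noteq> u \<longrightarrow> g' w \<noteq> g' u))"
      and I4: "S' \<noteq> {} \<longrightarrow> (\<exists>f t. f \<in> S' \<and> g' f = 3 - c \<and> a' < t \<and> lo f \<le> t \<and> t \<le> hi f \<and> (\<forall>x\<in>S'-{f}. t < lo x) \<and>
      (\<forall>v\<in>M. lo v \<le> a' \<longrightarrow> (\<forall>x\<in>S'. imeets lo hi v x \<longrightarrow> imeets lo hi v f \<and> (x \<noteq> f \<longrightarrow> g' x \<noteq> g' f))))"
      using less.IH[of "card P'" a' "3 - c"] unfolding P'_def by blast
    have S'lo: "\<forall>x\<in>S'. t < lo x"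
    proof (cases "S' = {}")
      case True then show ?thesis by simp
    next
      case False
      then obtain f' t' where f': "f' \<in> S'" "g' f' = 3 - c" "a' < t'" "lo f' \<le> t'" "t' \<le> hi f'" "\<forall>x\<in>S'-{f'}. t' < lo x"
        using I4 by blast
      have "t < lo f'"
      proof (rule ccontr)
        assume "\<not> t < lo f'"
        hence "f' \<in> C" using f' S'M ts unfolding C_def a'_def by auto
        thus False using smax f' unfolding a'_def by force
      qed
      thus ?thesis using f' ts unfolding a'_def by force
    qed
    have sS': "s \<notin> S'" using S'lo ls by force
    define S where "S = insert s S'"
    define g where "g x = (if x = s then c else g' x)" for x
    show ?thesis
    proof (rule exI[of _ S], rule exI[of _ g], intro conjI)
      show "S \<subseteq> M" using S'M sM by (auto simp: S_def)
      show "\<forall>x\<in>S. g x \<in> {1,2}" using g'c less.prems(2) by (auto simp: S_def g_def)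
      show "\<forall>v\<in>M. a < lo v \<longrightarrow> (\<exists>u\<in>S. imeets lo hi v u \<and> (\<forall>w\<in>S. imeets lo hi v w \<longrightarrow> w \<noteq> u \<longrightarrow> g w \<noteq> g u))"
      proof (intro ballI impI)
        fix v assume vM: "v \<in> M" and av: "a < lo v"
        show "\<exists>u\<in>S. imeets lo hi v u \<and> (\<forall>w\<in>S. imeets lo hi v w \<longrightarrow> w \<noteq> u \<longrightarrow> g w \<noteq> g u)"
        proof (cases "a' < lo v")
          case True
          then obtain u where u: "u \<in> S'" "imeets lo hi v u" "\<forall>w\<in>S'. imeets lo hi v w \<longrightarrow> w \<noteq> u \<longrightarrow> g' w \<noteq> g' u"
            using I3 vM by blast
          have "\<not> imeets lo hi v s" using True unfolding imeets_def a'_def by auto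
          moreover have "u \<noteq> s" using u sS' by auto
          ultimately show ?thesis using u by (intro bexI[of _ u]) (auto simp: S_def g_def)
        next
          case False
          have vP: "v \<in> P" using vM av by (simp add: P_def)
          have vs: "imeets lo hi v s" using False tle vP ls unfolding imeets_def a'_def by force
          show ?thesis
          proof (cases "\<exists>x\<in>S'. imeets lo hi v x")
            case True
            then obtain x where x: "x \<in> S'" "imeets lo hi v x" by blast
            then obtain f' t' where f': "f' \<in> S'" "g' f' = 3 - c" and
              I4': "\<forall>x\<in>S'. imeets lo hi v x \<longrightarrow> imeets lo hi v f' \<and> (x \<noteq> f' \<longrightarrow> g' x \<noteq> g' f')"
              using I4 False vM by force
            have "imeets lo hi v f'" using I4' x by blast
            moreover have "g' f' \<noteq> c" using f'(2) less.prems(2) by auto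
            ultimately show ?thesis using f' I4' sS'
              by (intro bexI[of _ f']) (auto simp: S_def g_def)
          next
            case False
            thus ?thesis using vs by (intro bexI[of _ s]) (auto simp: S_def g_def)
          qed
        qed
      qed
      show "S \<noteq> {} \<longrightarrow> (\<exists>f t. f \<in> S \<and> g f = c \<and> a < t \<and> lo f \<le> t \<and> t \<le> hi f \<and> (\<forall>x\<in>S-{f}. t < lo x) \<and>
      (\<forall>v\<in>M. lo v \<le> a \<longrightarrow> (\<forall>x\<in>S. imeets lo hi v x \<longrightarrow> imeets lo hi v f \<and> (x \<noteq> f \<longrightarrow> g x \<noteq> g f))))"
      proof (intro impI exI[of _ s] exI[of _ t] conjI)
        show "s \<in> S" by (simp add: S_def)
        show "g s = c" by (simp add: g_def)
        show "a < t" by (rule at)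
        show "lo s \<le> t" by (rule ls)
        show "t \<le> hi s" by (rule ts)
        show "\<forall>x\<in>S-{s}. t < lo x" using S'lo by (auto simp: S_def)
        show "\<forall>v\<in>M. lo v \<le> a \<longrightarrow> (\<forall>x\<in>S. imeets lo hi v x \<longrightarrow> imeets lo hi v s \<and> (x \<noteq> s \<longrightarrow> g x \<noteq> g s))"
        proof (intro ballI impI)
          fix v x assume vM: "v \<in> M" and va: "lo v \<le> a" and xS: "x \<in> S" and vx: "imeets lo hi v x"
          show "imeets lo hi v s \<and> (x \<noteq> s \<longrightarrow> g x \<noteq> g s)"
          proof (cases "x = s")
            case True thus ?thesis using vx by simp
          next
            case False
            hence xS': "x \<in> S'" using xS by (simp add: S_def)
            have tx: "t < lo x" using S'lo xS' by blast
            have vC: "v \<in> C" using vM va at tx vx unfolding C_def imeets_def by auto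
            have hv: "hi v \<le> a'" using smax vC by (simp add: a'_def)
            have vs: "imeets lo hi v s" using va at ts ls tx vx unfolding imeets_def by auto
            obtain f' t' where f': "f' \<in> S'" "g' f' = 3 - c" "a' < t'" "\<forall>x\<in>S'-{f'}. t' < lo x"
              using I4 xS' by blast
            have "x = f'"
            proof (rule ccontr)
              assume "x \<noteq> f'"
              hence "t' < lo x" using f' xS' by blast
              thus False using hv f'(3) vx unfolding imeets_def by auto
            qed
            thus ?thesis using vs False f'(2) less.prems(2) by (auto simp: g_def)
          qed
        qed
      qed
    qed
  qed
qed


definition rp :: "(real \<times> real) set \<Rightarrow> real \<times> real \<times> real \<times> real" where
  "rp R = (SOME q. fst q \<le> fst (snd q) \<and> fst (snd (snd q)) \<le> snd (snd (snd q)) \<and>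
      R = {fst q..fst (snd q)} \<times> {fst (snd (snd q))..snd (snd (snd q))})"
definition "xl R = fst (rp R)"
definition "xh R = fst (snd (rp R))"
definition "yl R = fst (snd (snd (rp R)))"
definition "yh R = snd (snd (snd (rp R)))"

lemma rp: assumes "is_rectangle R"
  shows "xl R \<le> xh R \<and> yl R \<le> yh R \<and> R = {xl R..xh R} \<times> {yl R..yh R}"
proof -
  obtain a b c d where "a \<le> b" "c \<le> d" "R = {a..b} \<times> {c..d}" using assms unfolding is_rectangle_def by blast
  hence "\<exists>q. fst q \<le> fst (snd q) \<and> fst (snd (snd q)) \<le> snd (snd (snd q)) \<and>
      R = {fst q..fst (snd q)} \<times> {fst (snd (snd q))..snd (snd (snd q))}"
    by (intro exI[of _ "(a,b,c,d)"]) simp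
  from someI_ex[OF this] show ?thesis unfolding xl_def xh_def yl_def yh_def rp_def .
qed

lemma rect_inter:
  assumes "is_rectangle R" "is_rectangle R'"
  shows "(R \<inter> R' \<noteq> {}) \<longleftrightarrow> (xl R \<le> xh R' \<and> xl R' \<le> xh R \<and> yl R \<le> yh R' \<and> yl R' \<le> yh R)"
proof
  assume "R \<inter> R' \<noteq> {}"
  then obtain x y where xy: "(x,y) \<in> R" "(x,y) \<in> R'" by auto
  have e1: "R = {xl R..xh R} \<times> {yl R..yh R}" using rp[OF assms(1)] by blast
  have e2: "R' = {xl R'..xh R'} \<times> {yl R'..yh R'}" using rp[OF assms(2)] by blast
  have "(x,y) \<in> {xl R..xh R} \<times> {yl R..yh R}" by (simp only: e1[symmetric]) (rule xy(1))
  moreover have "(x,y) \<in> {xl R'..xh R'} \<times> {yl R'..yh R'}" by (simp only: e2[symmetric]) (rule xy(2))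
  ultimately show "xl R \<le> xh R' \<and> xl R' \<le> xh R \<and> yl R \<le> yh R' \<and> yl R' \<le> yh R"
    by auto
next
  assume h: "xl R \<le> xh R' \<and> xl R' \<le> xh R \<and> yl R \<le> yh R' \<and> yl R' \<le> yh R"
  have e1: "R = {xl R..xh R} \<times> {yl R..yh R}" using rp[OF assms(1)] by blast
  have e2: "R' = {xl R'..xh R'} \<times> {yl R'..yh R'}" using rp[OF assms(2)] by blast
  have i1: "xl R \<le> xh R" "yl R \<le> yh R" using rp[OF assms(1)] by blast+
  have i2: "xl R' \<le> xh R'" "yl R' \<le> yh R'" using rp[OF assms(2)] by blast+
  have m1: "(max (xl R) (xl R'), max (yl R) (yl R')) \<in> {xl R..xh R} \<times> {yl R..yh R}"
    using h i1 by auto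
  have m2: "(max (xl R) (xl R'), max (yl R) (yl R')) \<in> {xl R'..xh R'} \<times> {yl R'..yh R'}"
    using h i2 by auto
  have "(max (xl R) (xl R'), max (yl R) (yl R')) \<in> R \<inter> R'"
    using m1 m2 by (simp only: e1[symmetric] e2[symmetric] IntI)
  thus "R \<inter> R' \<noteq> {}" by blast
qed

lemma rect_ne: "is_rectangle R \<Longrightarrow> R \<inter> R \<noteq> {}"
  using rect_inter[of R R] rp[of R] by auto

lemma median:
  fixes l h :: "'a \<Rightarrow> real"
  assumes fin: "finite F" and lh: "\<forall>R\<in>F. l R \<le> h R" and cF: "card F \<le> 2 ^ Suc k"
  shows "\<exists>x0. card {R\<in>F. h R < x0} \<le> 2^k \<and> card {R\<in>F. x0 < l R} \<le> 2^k"
proof (cases "F = {}")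
  case True thus ?thesis by simp
next
  case False
  define X where "X = {x \<in> h ` F. card F \<le> 2 * card {R\<in>F. h R \<le> x}}"
  have "Max (h ` F) \<in> X"
  proof -
    have "{R\<in>F. h R \<le> Max (h ` F)} = F" using fin by auto
    thus ?thesis using fin False unfolding X_def by auto
  qed
  hence Xne: "X \<noteq> {}" by auto
  have finX: "finite X" using fin unfolding X_def by auto
  define x0 where "x0 = Min X"
  have x0X: "x0 \<in> X" using finX Xne by (simp add: x0_def)
  have x0min: "\<forall>y\<in>X. x0 \<le> y" using finX by (simp add: x0_def)
  have R1: "card {R\<in>F. x0 < l R} \<le> 2^k"
  proof -
    have sub: "{R\<in>F. x0 < l R} \<subseteq> F - {R\<in>F. h R \<le> x0}" using lh by force
    have "card {R\<in>F. x0 < l R} \<le> card (F - {R\<in>F. h R \<le> x0})" using fin by (intro card_mono[OF _ sub]) auto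
    also have "\<dots> = card F - card {R\<in>F. h R \<le> x0}" using fin by (intro card_Diff_subset) auto
    finally show ?thesis using x0X cF unfolding X_def by auto
  qed
  have L1: "card {R\<in>F. h R < x0} \<le> 2^k"
  proof (cases "{R\<in>F. h R < x0} = {}")
    case True thus ?thesis by (metis card.empty zero_le)
  next
    case False
    define L where "L = {R\<in>F. h R < x0}"
    have finL: "finite L" using fin by (simp add: L_def)
    define y where "y = Max (h ` L)"
    have yin: "y \<in> h ` L" using finL False by (simp add: y_def L_def)
    have yx: "y < x0" using yin by (auto simp: L_def)
    have yF: "y \<in> h ` F" using yin by (auto simp: L_def)
    have "y \<notin> X" using x0min yx by force
    hence lt: "2 * card {R\<in>F. h R \<le> y} < card F" using yF unfolding X_def by auto
    have "L \<subseteq> {R\<in>F. h R \<le> y}" using finL by (auto simp: y_def L_def)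
    hence "card L \<le> card {R\<in>F. h R \<le> y}" using fin by (intro card_mono) auto
    thus ?thesis using lt cF unfolding L_def by simp
  qed
  show ?thesis using L1 R1 by blast
qed


definition ov :: "(real \<times> real) set \<Rightarrow> (real \<times> real) set \<Rightarrow> bool" where
  "ov u v \<longleftrightarrow> u \<inter> v \<noteq> {}"

lemma rect_ov: "is_rectangle R \<Longrightarrow> is_rectangle R' \<Longrightarrow>
   ov R R' \<longleftrightarrow> (xl R \<le> xh R' \<and> xl R' \<le> xh R \<and> yl R \<le> yh R' \<and> yl R' \<le> yh R)"
  unfolding ov_def by (rule rect_inter)

lemma ov_sym: "ov u v \<longleftrightarrow> ov v u"
  unfolding ov_def by (simp add: Int_commute)

lemma ov_refl: "is_rectangle R \<Longrightarrow> ov R R"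
  unfolding ov_def by (rule rect_ne)

lemma mainlem:
  "\<forall>F. finite F \<longrightarrow> (\<forall>R\<in>F. is_rectangle R) \<longrightarrow> card F \<le> 2^k \<longrightarrow>
    (\<exists>f. f ` F \<subseteq> {..<2*k+3} \<and> (\<forall>v\<in>F. \<exists>u\<in>F. ov u v \<and> f u \<noteq> 0 \<and>
        (\<forall>w\<in>F. ov w v \<longrightarrow> w \<noteq> u \<longrightarrow> f w \<noteq> f u)))"
proof (induction k)
  case 0
  show ?case
  proof (intro allI impI)
    fix F :: "(real \<times> real) set set"
    assume fin: "finite F" and rF: "\<forall>R\<in>F. is_rectangle R" and c: "card F \<le> 2^0"
    show "\<exists>f. f ` F \<subseteq> {..<2*(0::nat)+3} \<and> (\<forall>v\<in>F. \<exists>u\<in>F. ov u v \<and> f u \<noteq> 0 \<and>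
        (\<forall>w\<in>F. ov w v \<longrightarrow> w \<noteq> u \<longrightarrow> f w \<noteq> f u))"
    proof -
      have h: "\<forall>v\<in>F. \<exists>u\<in>F. ov u v \<and> (1::nat) \<noteq> 0 \<and> (\<forall>w\<in>F. ov w v \<longrightarrow> w \<noteq> u \<longrightarrow> (1::nat) \<noteq> 1)"
      proof
        fix v assume vF: "v \<in> F"
        have "card F \<le> Suc 0" using c by simp
        hence "\<forall>a1\<in>F. \<forall>a2\<in>F. a1 = a2" using card_le_Suc0_iff_eq[OF fin] by blast
        hence "\<forall>w\<in>F. w = v" using vF by blast
        thus "\<exists>u\<in>F. ov u v \<and> (1::nat) \<noteq> 0 \<and> (\<forall>w\<in>F. ov w v \<longrightarrow> w \<noteq> u \<longrightarrow> (1::nat) \<noteq> 1)"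
          using vF ov_refl rF by blast
      qed
      show ?thesis by (rule exI[of _ "\<lambda>_. (1::nat)"]) (use h in auto)
    qed
  qed
next
  case (Suc k)
  show ?case
  proof (intro allI impI)
    fix F :: "(real \<times> real) set set"
    assume fin: "finite F" and rF: "\<forall>R\<in>F. is_rectangle R" and c: "card F \<le> 2^Suc k"
    have lh: "\<forall>R\<in>F. xl R \<le> xh R" using rF rp by blast
    obtain x0 where cL: "card {R\<in>F. xh R < x0} \<le> 2^k" and cR: "card {R\<in>F. x0 < xl R} \<le> 2^k"
      using median[OF fin lh c] by blast
    define L where "L = {R\<in>F. xh R < x0}"
    define Rt where "Rt = {R\<in>F. x0 < xl R}"
    define M where "M = {R\<in>F. xl R \<le> x0 \<and> x0 \<le> xh R}"
    have part: "\<forall>w\<in>F. w \<in> L \<or> w \<in> Rt \<or> w \<in> M" by (auto simp: L_def Rt_def M_def)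
    have LR: "\<forall>v\<in>L. \<forall>w\<in>Rt. \<not> ov v w"
    proof (intro ballI)
      fix v w assume "v \<in> L" "w \<in> Rt"
      hence "v \<in> F" "w \<in> F" "xh v < x0" "x0 < xl w" by (simp_all add: L_def Rt_def)
      thus "\<not> ov v w" using rect_ov[of v w] rF by force
    qed
    have LRd: "L \<inter> Rt = {}" using lh by (auto simp: L_def Rt_def)
    obtain fL where fL: "fL ` L \<subseteq> {..<2*k+3}" "\<forall>v\<in>L. \<exists>u\<in>L. ov u v \<and> fL u \<noteq> 0 \<and>
        (\<forall>w\<in>L. ov w v \<longrightarrow> w \<noteq> u \<longrightarrow> fL w \<noteq> fL u)"
    proof -
      have a1: "finite L" "\<forall>R\<in>L. is_rectangle R" "card L \<le> 2^k"
        using fin rF cL by (simp_all add: L_def)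
      have "\<exists>f. f ` L \<subseteq> {..<2*k+3} \<and> (\<forall>v\<in>L. \<exists>u\<in>L. ov u v \<and> f u \<noteq> 0 \<and>
        (\<forall>w\<in>L. ov w v \<longrightarrow> w \<noteq> u \<longrightarrow> f w \<noteq> f u))"
        using spec[OF Suc.IH, of L] a1 by (rule mp[OF mp[OF mp]])
      thus ?thesis using that by blast
    qed
    obtain fR where fR: "fR ` Rt \<subseteq> {..<2*k+3}" "\<forall>v\<in>Rt. \<exists>u\<in>Rt. ov u v \<and> fR u \<noteq> 0 \<and>
        (\<forall>w\<in>Rt. ov w v \<longrightarrow> w \<noteq> u \<longrightarrow> fR w \<noteq> fR u)"
    proof -
      have a1: "finite Rt" "\<forall>R\<in>Rt. is_rectangle R" "card Rt \<le> 2^k"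
        using fin rF cR by (simp_all add: Rt_def)
      have "\<exists>f. f ` Rt \<subseteq> {..<2*k+3} \<and> (\<forall>v\<in>Rt. \<exists>u\<in>Rt. ov u v \<and> f u \<noteq> 0 \<and>
        (\<forall>w\<in>Rt. ov w v \<longrightarrow> w \<noteq> u \<longrightarrow> f w \<noteq> f u))"
        using spec[OF Suc.IH, of Rt] a1 by (rule mp[OF mp[OF mp]])
      thus ?thesis using that by blast
    qed
    have finM: "finite M" using fin by (simp add: M_def)
    have ordM: "\<forall>v\<in>M. yl v \<le> yh v" using rF rp by (auto simp: M_def)
    define a where "a = Min (insert 0 (yl ` M)) - 1"
    have aM: "\<forall>v\<in>M. a < yl v"
    proof
      fix v assume "v \<in> M"
      hence "Min (insert 0 (yl ` M)) \<le> yl v" using finM by (intro Min_le) auto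
      thus "a < yl v" by (simp add: a_def)
    qed
    obtain S g where SM: "S \<subseteq> M" and gS: "\<forall>x\<in>S. g x \<in> {1,2::nat}" and
      I3: "\<forall>v\<in>M. a < yl v \<longrightarrow> (\<exists>u\<in>S. imeets yl yh v u \<and> (\<forall>w\<in>S. imeets yl yh v w \<longrightarrow> w \<noteq> u \<longrightarrow> g w \<noteq> g u))"
    proof -
      have "\<exists>S g. S \<subseteq> M \<and> (\<forall>x\<in>S. g x \<in> {1,2::nat}) \<and>
   (\<forall>v\<in>M. a < yl v \<longrightarrow> (\<exists>u\<in>S. imeets yl yh v u \<and> (\<forall>w\<in>S. imeets yl yh v w \<longrightarrow> w \<noteq> u \<longrightarrow> g w \<noteq> g u)))"
        using chain[OF finM ordM, where a=a and c=1 and m="card {v\<in>M. a < yl v}"] by auto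
      thus ?thesis using that by blast
    qed
    have Mint: "\<forall>v\<in>M. \<forall>w\<in>M. (ov w v) \<longleftrightarrow> imeets yl yh v w"
    proof (intro ballI)
      fix v w assume vw0: "v \<in> M" "w \<in> M"
      from vw0 show "(ov w v) \<longleftrightarrow> imeets yl yh v w"
      proof -
        assume vw: "v \<in> M" "w \<in> M"
        hence rv: "is_rectangle v" and rw: "is_rectangle w" using rF by (auto simp: M_def)
        have e: "ov w v \<longleftrightarrow> (xl w \<le> xh v \<and> xl v \<le> xh w \<and> yl w \<le> yh v \<and> yl v \<le> yh w)"
          by (rule rect_ov[OF rw rv])
        have "xl w \<le> xh v" "xl v \<le> xh w" using vw by (auto simp: M_def)
        thus ?thesis unfolding e imeets_def by auto
      qed
    qed
    define f where "f v = (if v \<in> L then fL v else if v \<in> Rt then fR v else if v \<in> S then 2*k+2+g v else 0)" for v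
    show "\<exists>f. f ` F \<subseteq> {..<2*Suc k+3} \<and> (\<forall>v\<in>F. \<exists>u\<in>F. ov u v \<and> f u \<noteq> 0 \<and>
        (\<forall>w\<in>F. ov w v \<longrightarrow> w \<noteq> u \<longrightarrow> f w \<noteq> f u))"
    proof (rule exI[of _ f], intro conjI ballI)
      show "f ` F \<subseteq> {..<2*Suc k+3}"
      proof
        fix y assume "y \<in> f ` F"
        then obtain v where "v \<in> F" "y = f v" by auto
        moreover have "f v < 2*Suc k+3"
        proof -
          consider "v \<in> L" | "v \<notin> L" "v \<in> Rt" | "v \<notin> L" "v \<notin> Rt" "v \<in> S" | "v \<notin> L" "v \<notin> Rt" "v \<notin> S" by blast
          thus ?thesis
          proof cases
            case 1 thus ?thesis using fL(1) unfolding f_def by auto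
          next
            case 2 thus ?thesis using fR(1) unfolding f_def by auto
          next
            case 3 thus ?thesis using gS unfolding f_def by auto
          next
            case 4 thus ?thesis unfolding f_def by auto
          qed
        qed
        ultimately show "y \<in> {..<2*Suc k+3}" by simp
      qed
      fix v assume vF: "v \<in> F"
      have fM: "\<forall>w\<in>M. f w = 0 \<or> f w \<ge> 2*k+3"
        using gS LRd unfolding f_def M_def L_def Rt_def by auto
      have LM: "\<forall>w\<in>M. w \<notin> L \<and> w \<notin> Rt" by (auto simp: L_def Rt_def M_def)
      show "\<exists>u\<in>F. ov u v \<and> f u \<noteq> 0 \<and> (\<forall>w\<in>F. ov w v \<longrightarrow> w \<noteq> u \<longrightarrow> f w \<noteq> f u)"
      proof -
        consider "v \<in> L" | "v \<in> Rt" | "v \<in> M" using part vF by blast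
        then show ?thesis
        proof cases
          case 1
          then obtain u where u: "u \<in> L" "ov u v" "fL u \<noteq> 0" "\<forall>w\<in>L. ov w v \<longrightarrow> w \<noteq> u \<longrightarrow> fL w \<noteq> fL u"
            using fL(2) by blast
          have fu: "f u = fL u" "f u < 2*k+3" using u fL(1) by (auto simp: f_def)
          show ?thesis
          proof (rule bexI[of _ u], intro conjI ballI impI)
            fix w assume wF: "w \<in> F" and wv: "ov w v" and wu: "w \<noteq> u"
            consider "w \<in> L" | "w \<in> Rt" | "w \<in> M" using part wF by blast
            then show "f w \<noteq> f u"
            proof cases
              case 1 thus ?thesis using u wv wu fu by (simp add: f_def)
            next
              case 2
              hence "\<not> ov v w" using LR \<open>v \<in> L\<close> by blast
              hence "\<not> ov w v" by (subst ov_sym)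
              thus ?thesis using wv by contradiction
            next
              case 3 thus ?thesis using fM fu u(3) by force
            qed
          qed (use u fu L_def in auto)
        next
          case 2
          then obtain u where u: "u \<in> Rt" "ov u v" "fR u \<noteq> 0" "\<forall>w\<in>Rt. ov w v \<longrightarrow> w \<noteq> u \<longrightarrow> fR w \<noteq> fR u"
            using fR(2) by blast
          have fu: "f u = fR u" "f u < 2*k+3" using u fR(1) LRd by (auto simp: f_def)
          show ?thesis
          proof (rule bexI[of _ u], intro conjI ballI impI)
            fix w assume wF: "w \<in> F" and wv: "ov w v" and wu: "w \<noteq> u"
            consider "w \<in> L" | "w \<in> Rt" | "w \<in> M" using part wF by blast
            then show "f w \<noteq> f u"
            proof cases
              case 1 thus ?thesis using LR \<open>v \<in> Rt\<close> wv by blast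
            next
              case 2 thus ?thesis using u wv wu fu LRd by (auto simp: f_def)
            next
              case 3 thus ?thesis using fM fu u(3) by force
            qed
          qed (use u fu Rt_def in auto)
        next
          case 3
          have av: "a < yl v" using aM 3 by (rule bspec)
          obtain u where u: "u \<in> S" "imeets yl yh v u" "\<forall>w\<in>S. imeets yl yh v w \<longrightarrow> w \<noteq> u \<longrightarrow> g w \<noteq> g u"
            using I3[rule_format, OF 3 av] by (elim bexE conjE)
          have uM: "u \<in> M" using u SM by blast
          have uL: "u \<notin> L" "u \<notin> Rt" using uM LM by blast+
          have fu1: "f u = 2*k+2+g u" using uL u(1) by (simp add: f_def)
          have "g u \<in> {1,2}" using gS u(1) by blast
          hence fu2: "f u \<ge> 2*k+3" using fu1 by auto
          show ?thesis
          proof (rule bexI[of _ u], intro conjI ballI impI)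
            show "ov u v" by (subst Mint[rule_format, OF 3 uM]) (rule u(2))
            show "f u \<noteq> 0" using fu2 by simp
            fix w assume wF: "w \<in> F" and wv: "ov w v" and wu: "w \<noteq> u"
            consider "w \<in> L" | "w \<in> Rt" | "w \<in> M" using part wF by blast
            then show "f w \<noteq> f u"
            proof cases
              case 1
              hence "f w = fL w" by (simp add: f_def)
              moreover have "fL w < 2*k+3" using fL(1) 1 by auto
              ultimately show ?thesis using fu2 by linarith
            next
              case 2
              hence "w \<notin> L" using LRd by blast
              hence "f w = fR w" using 2 by (simp add: f_def)
              moreover have "fR w < 2*k+3" using fR(1) 2 by auto
              ultimately show ?thesis using fu2 by linarith
            next
              case w3: 3
              have wL: "w \<notin> L" "w \<notin> Rt" using w3 LM by blast+
              show ?thesis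
              proof (cases "w \<in> S")
                case True
                have "imeets yl yh v w" using Mint[rule_format, OF 3 w3] wv by simp
                hence "g w \<noteq> g u" using u True wu by blast
                moreover have "f w = 2*k+2+g w" using wL True by (simp add: f_def)
                ultimately show ?thesis using fu1 by simp
              next
                case False
                hence "f w = 0" using wL by (simp add: f_def)
                thus ?thesis using fu2 by simp
              qed
            qed
          qed (use uM M_def in auto)
        qed
      qed
    qed
  qed
qed


lemma chi_bound:
  fixes F :: "(real \<times> real) set set"
  assumes fin: "finite F" and rF: "\<forall>R\<in>F. is_rectangle R" and c: "card F \<le> 2^k"
  shows "chi_cf_cn F inter_adj \<le> 2*k+3"
proof -
  have H: "finite F \<longrightarrow> (\<forall>R\<in>F. is_rectangle R) \<longrightarrow> card F \<le> 2^k \<longrightarrow>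
    (\<exists>f. f ` F \<subseteq> {..<2*k+3} \<and> (\<forall>v\<in>F. \<exists>u\<in>F. ov u v \<and> f u \<noteq> 0 \<and>
        (\<forall>w\<in>F. ov w v \<longrightarrow> w \<noteq> u \<longrightarrow> f w \<noteq> f u)))"
    by (rule spec[OF mainlem])
  have ex: "\<exists>f. f ` F \<subseteq> {..<2*k+3} \<and> (\<forall>v\<in>F. \<exists>u\<in>F. ov u v \<and> f u \<noteq> 0 \<and>
        (\<forall>w\<in>F. ov w v \<longrightarrow> w \<noteq> u \<longrightarrow> f w \<noteq> f u))"
    using H fin rF c by (rule mp[OF mp[OF mp]])
  obtain f where f: "f ` F \<subseteq> {..<2*k+3}" "\<forall>v\<in>F. \<exists>u\<in>F. ov u v \<and> f u \<noteq> 0 \<and>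
        (\<forall>w\<in>F. ov w v \<longrightarrow> w \<noteq> u \<longrightarrow> f w \<noteq> f u)"
    using ex by (elim exE conjE)
  have cn: "closed_nbhd F inter_adj v = {u\<in>F. ov u v}" if "v \<in> F" for v
    using that rect_ne rF by (auto simp: closed_nbhd_def inter_adj_def ov_def)
  have "cf_cn_coloring F inter_adj (2*k+3) f"
    unfolding cf_cn_coloring_def
  proof (intro conjI ballI)
    show "f ` F \<subseteq> {..<2*k+3}" by (rule f(1))
    fix v assume vF: "v \<in> F"
    obtain u where u: "u \<in> F" "ov u v" "\<forall>w\<in>F. ov w v \<longrightarrow> w \<noteq> u \<longrightarrow> f w \<noteq> f u"
      using bspec[OF f(2) vF] by (elim bexE conjE)
    have uN: "u \<in> closed_nbhd F inter_adj v" using cn[OF vF] u by simp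
    show "\<exists>u\<in>closed_nbhd F inter_adj v. \<forall>w\<in>closed_nbhd F inter_adj v. w \<noteq> u \<longrightarrow> f w \<noteq> f u"
    proof (rule bexI[OF _ uN], intro ballI impI)
      fix w assume "w \<in> closed_nbhd F inter_adj v" "w \<noteq> u"
      thus "f w \<noteq> f u" using cn[OF vF] u(3) by simp
    qed
  qed
  hence "\<exists>f. cf_cn_coloring F inter_adj (2*k+3) f" by (rule exI[of _ f])
  thus ?thesis unfolding chi_cf_cn_def by (rule Least_le)
qed

theorem theorem1p6:
  shows "\<exists>C::real. \<forall>(n::nat) (F::(real \<times> real) set set).
           n \<ge> 2 \<longrightarrow> finite F \<longrightarrow> card F = n \<longrightarrow> (\<forall>R\<in>F. is_rectangle R) \<longrightarrow>
           real (chi_cf_cn F inter_adj) \<le> C * ln (real n)"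
proof (intro exI[of _ "7 / ln 2"] allI impI)
  fix n :: nat and F :: "(real \<times> real) set set"
  assume n2: "n \<ge> 2" and fin: "finite F" and cF: "card F = n" and rF: "\<forall>R\<in>F. is_rectangle R"
  define k where "k = (LEAST k. n \<le> 2^k)"
  have ex: "n \<le> 2^n" using less_exp[of n] by simp
  have nk: "n \<le> 2^k" unfolding k_def by (rule LeastI[of _ n]) (rule ex)
  have k0: "k \<noteq> 0" using nk n2 by (cases k) auto
  have "\<not> n \<le> 2^(k-1)" unfolding k_def by (rule not_less_Least) (use k0 in \<open>simp add: k_def\<close>)
  hence lt: "2^(k-1) < n" by simp
  have chi: "chi_cf_cn F inter_adj \<le> 2*k+3" using chi_bound[OF fin rF] nk cF by simp
  have ln2: "0 < ln (2::real)" by simp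
  have "ln ((2::real)^(k-1)) < ln (real n)"
    using lt by (subst ln_less_cancel_iff) (auto simp del: of_nat_power simp: of_nat_power[symmetric])
  hence A: "real (k-1) * ln 2 < ln (real n)" by (simp add: ln_realpow)
  have B: "ln 2 \<le> ln (real n)" using n2 by simp
  have eq: "real (2*k+3) = 2 * real (k-1) + 5" using k0 by simp
  have "real (2*k+3) * ln 2 = 2 * (real (k-1) * ln 2) + 5 * ln 2"
    unfolding eq by (simp only: distrib_right mult.assoc)
  hence "real (2*k+3) * ln 2 \<le> 7 * ln (real n)" using A B by linarith
  hence "real (2*k+3) \<le> 7 / ln 2 * ln (real n)" using ln2 by (simp add: field_simps)
  thus "real (chi_cf_cn F inter_adj) \<le> 7 / ln 2 * ln (real n)" using chi
    by (meson of_nat_le_iff order_trans)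
qed

end
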